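(* Let $\rho$ be a probability density on $\mathbb{R}$ supported on $[\alpha,\beta]$ with $0\le\alpha<\beta<\infty$, continuous and bounded on $[\alpha,\beta]$. Fix $\lambda\in(\alpha,\beta)$ with $\rho(\lambda)>0$ and assume $\rho$ is continuously differentiable on a neighborhood of $\lambda$. For each $p$ in an unbounded sequence of positive integers, let $0<\lambda^{(p)}_1<\lambda^{(p)}_2<\cdots<\lambda^{(p)}_p$ be simple eigenvalues, and let $i=i(p)$ be an index with $2\le i\le p-1$ and $\lambda^{(p)}_{i}=\lambda$. Write $s_i^{-}=\lambda_i^{(p)}-\lambda^{(p)}_{i-1}$, $s_i^{+}=\lambda^{(p)}_{i+1}-\lambda_i^{(p)}$, and $f_\lambda(x)=\lambda x/(\lambda-x)^2$. Assume: (i) there are constants $0<a<b$ such that $a\le p\,s_i^{\pm}\le b$ for all $p$; (ii) $\frac1p\sum_{j=1}^{i-2} f_\lambda(\lambda^{(p)}_j)-\int_\alpha^{\lambda-s_i^-}f_\lambda(x)\rho(x)\,dx=o(p)$ and $\frac1p\sum_{j=i+2}^{p} f_\lambda(\lambda^{(p)}_j)-\int_{\lambda+s_i^+}^{\beta}f_\lambda(x)\rho(x)\,dx=o(p)$ as $p\to\infty$. Let $h_i=\sum_{j\ne i}\frac{\lambda_i\lambda_j}{(\lambda_i-\lambda_j)^2}$ and $$\hat h_i=\lambda^2\left[\frac{1}{(s_i^-)^2}+\frac{1}{(s_i^+)^2}+p\rho(\lambda)\left(\frac1{s_i^-}+\frac1{s_i^+}\right)\right].$$ Then $h_i-\hat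 h_i=o(p^2)$ while $\hat h_i$ is of exact order $p^2$; in particular $h_i/\hat h_i\to1$ as $p\to\infty$.
   Context: This is the paper's large-$p$ approximation of the quantity $h_i$ appearing in the asymptotic expected eigenvector error $\mathbb{E}[n\|\bm u_i-\tilde{\bm u}_i\|^2]\to h_i$ for Wishart sample covariance matrices. Hypothesis (i) encodes that nearest-neighbour eigenvalue gaps are of order $1/(p\rho(\lambda))$; hypothesis (ii) encodes that the empirical spectral density converges to $\rho$ fast enough near $\lambda$. *)

theory Defs
  imports "HOL-Analysis.Analysis" "HOL-Library.Landau_Symbols"
begin

definition flam :: "real \<Rightarrow> real \<Rightarrow> real" where
  "flam l x = l * x / (l - x)^2"

end

theory Submission
  imports Defs
begin

lemma left_int:
  fixes g :: "real \<Rightarrow> real"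
  assumes AL: "A < L" and gc: "continuous_on {A..L} g" and e: "e > 0"
  shows "\<exists>\<delta>>0. \<exists>C. \<forall>s. 0 < s \<and> s < \<delta> \<longrightarrow>
     \<bar>integral {A..L-s} (\<lambda>x. g x / (L-x)^2) - g L / s\<bar> \<le> e / s + C"
proof -
  have "L \<in> {A..L}" using AL by auto
  with gc e obtain d where d: "d > 0" "\<And>x. x \<in> {A..L} \<Longrightarrow> dist x L < d \<Longrightarrow> dist (g x) (g L) < e"
    unfolding continuous_on_iff by metis
  define \<delta> where "\<delta> = min (d/2) (L - A)"
  have dp: "\<delta> > 0" using d AL by (simp add: \<delta>_def)
  define C0 where "C0 = integral {A..L-\<delta>} (\<lambda>x. g x / (L-x)^2)"
  show ?thesis
  proof (rule exI[of _ \<delta>], intro conjI dp exI[of _ "\<bar>C0\<bar> + \<bar>g L\<bar> / \<delta>"] allI impI)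
    fix s assume s: "0 < s \<and> s < \<delta>"
    have sub: "{A..L-s} \<subseteq> {A..L}" using s by auto
    have cont: "continuous_on {A..L-s} (\<lambda>x. g x / (L-x)^2)"
      using s by (intro continuous_intros continuous_on_subset[OF gc sub]) auto
    have int1: "(\<lambda>x. g x / (L-x)^2) integrable_on {A..L-s}"
      by (rule integrable_continuous_interval[OF cont])
    have split: "integral {A..L-\<delta>} (\<lambda>x. g x / (L-x)^2) + integral {L-\<delta>..L-s} (\<lambda>x. g x / (L-x)^2)
        = integral {A..L-s} (\<lambda>x. g x / (L-x)^2)"
      using s dp by (intro Henstock_Kurzweil_Integration.integral_combine[OF _ _ int1]) (auto simp: \<delta>_def)
    have sub2: "{L-\<delta>..L-s} \<subseteq> {A..L-s}" using s by (auto simp: \<delta>_def)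
    have int2: "(\<lambda>x. g x / (L-x)^2) integrable_on {L-\<delta>..L-s}"
      using integrable_on_subinterval[OF int1 sub2] by simp
    have FTCc: "((\<lambda>x. c / (L-x)^2) has_integral (c / s - c / \<delta>)) {L-\<delta>..L-s}" for c
    proof -
      have "((\<lambda>x. c / (L-x)^2) has_integral ((\<lambda>x. c / (L - x)) (L-s) - (\<lambda>x. c / (L - x)) (L-\<delta>))) {L-\<delta>..L-s}"
      proof (rule fundamental_theorem_of_calculus)
        show "L - \<delta> \<le> L - s" using s by simp
        fix x assume x: "x \<in> {L-\<delta>..L-s}"
        then have "L - x \<noteq> 0" using s by auto
        then have "((\<lambda>x. c / (L - x)) has_real_derivative c / (L-x)^2) (at x within {L-\<delta>..L-s})"
          by (auto intro!: derivative_eq_intros simp: power2_eq_square field_simps)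
        then show "((\<lambda>x. c / (L - x)) has_vector_derivative c / (L-x)^2) (at x within {L-\<delta>..L-s})"
          by (simp add: has_real_derivative_iff_has_vector_derivative)
      qed
      then show ?thesis by simp
    qed
    note FTC = FTCc[of "g L"]
    have int3: "(\<lambda>x. g L / (L-x)^2) integrable_on {L-\<delta>..L-s}" using FTC by blast
    have FTCe: "((\<lambda>x. e / (L-x)^2) has_integral (e / s - e / \<delta>)) {L-\<delta>..L-s}"
      by (rule FTCc)
    have D: "\<bar>integral {L-\<delta>..L-s} (\<lambda>x. g x / (L-x)^2 - g L / (L-x)^2)\<bar> \<le> e / s - e / \<delta>"
    proof -
      have "norm (integral {L-\<delta>..L-s} (\<lambda>x. g x / (L-x)^2 - g L / (L-x)^2)) \<le> integral {L-\<delta>..L-s} (\<lambda>x. e / (L-x)^2)"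
      proof (rule integral_norm_bound_integral)
        show "(\<lambda>x. g x / (L-x)^2 - g L / (L-x)^2) integrable_on {L-\<delta>..L-s}"
          using int2 int3 by (rule integrable_diff)
        show "(\<lambda>x. e / (L-x)^2) integrable_on {L-\<delta>..L-s}" using FTCe by blast
        fix x assume x: "x \<in> {L-\<delta>..L-s}"
        then have xin: "x \<in> {A..L}" "dist x L < d" using s d by (auto simp: \<delta>_def dist_real_def)
        have "\<bar>g x - g L\<bar> \<le> e" using d(2)[OF xin] by (simp add: dist_real_def)
        moreover have "(L-x)^2 > 0" using x s by auto
        ultimately show "norm (g x / (L-x)^2 - g L / (L-x)^2) \<le> e / (L-x)^2"
          by (simp add: diff_divide_distrib[symmetric] abs_div divide_right_mono)
      qed
      then show ?thesis using FTCe by (simp add: integral_unique)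
    qed
    have "integral {L-\<delta>..L-s} (\<lambda>x. g x / (L-x)^2 - g L / (L-x)^2)
       = integral {L-\<delta>..L-s} (\<lambda>x. g x / (L-x)^2) - (g L / s - g L / \<delta>)"
      using integral_diff[OF int2 int3] FTC by (simp add: integral_unique)
    then have "\<bar>integral {A..L-s} (\<lambda>x. g x / (L-x)^2) - g L / s\<bar>
       = \<bar>C0 + integral {L-\<delta>..L-s} (\<lambda>x. g x / (L-x)^2 - g L / (L-x)^2) - g L / \<delta>\<bar>"
      using split by (simp add: C0_def)
    also have "\<dots> \<le> \<bar>C0\<bar> + (e / s - e/\<delta>) + \<bar>g L\<bar> / \<delta>"
      using D dp abs_divide[of "g L" \<delta>] by (smt (verit))
    also have "\<dots> \<le> e / s + (\<bar>C0\<bar> + \<bar>g L\<bar> / \<delta>)" using e dp by simp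
    finally have X: "\<bar>integral {A..L-s} (\<lambda>x. g x / (L-x)^2) - g L / s\<bar> \<le> e / s + (\<bar>C0\<bar> + \<bar>g L\<bar> / \<delta>)" .
    then show "\<bar>integral {A..L-s} (\<lambda>x. g x / (L-x)^2) - g L / s\<bar> \<le> e / s + (\<bar>C0\<bar> + \<bar>g L\<bar> / \<delta>)" by simp
  qed
qed

lemma right_int:
  fixes g :: "real \<Rightarrow> real"
  assumes AL: "L < B" and gc: "continuous_on {L..B} g" and e: "e > 0"
  shows "\<exists>\<delta>>0. \<exists>C. \<forall>s. 0 < s \<and> s < \<delta> \<longrightarrow>
     \<bar>integral {L+s..B} (\<lambda>x. g x / (x-L)^2) - g L / s\<bar> \<le> e / s + C"
proof -
  have "L \<in> {L..B}" using AL by auto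
  with gc e obtain d where d: "d > 0" "\<And>x. x \<in> {L..B} \<Longrightarrow> dist x L < d \<Longrightarrow> dist (g x) (g L) < e"
    unfolding continuous_on_iff by metis
  define \<delta> where "\<delta> = min (d/2) (B - L)"
  have dp: "\<delta> > 0" using d AL by (simp add: \<delta>_def)
  define C0 where "C0 = integral {L+\<delta>..B} (\<lambda>x. g x / (x-L)^2)"
  show ?thesis
  proof (rule exI[of _ \<delta>], intro conjI dp exI[of _ "\<bar>C0\<bar> + \<bar>g L\<bar> / \<delta>"] allI impI)
    fix s assume s: "0 < s \<and> s < \<delta>"
    have sub: "{L+s..B} \<subseteq> {L..B}" using s by auto
    have cont: "continuous_on {L+s..B} (\<lambda>x. g x / (x-L)^2)"
      using s by (intro continuous_intros continuous_on_subset[OF gc sub]) auto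
    have int1: "(\<lambda>x. g x / (x-L)^2) integrable_on {L+s..B}"
      by (rule integrable_continuous_interval[OF cont])
    have split: "integral {L+s..L+\<delta>} (\<lambda>x. g x / (x-L)^2) + integral {L+\<delta>..B} (\<lambda>x. g x / (x-L)^2)
        = integral {L+s..B} (\<lambda>x. g x / (x-L)^2)"
      using s dp by (intro Henstock_Kurzweil_Integration.integral_combine[OF _ _ int1]) (auto simp: \<delta>_def)
    have sub2: "{L+s..L+\<delta>} \<subseteq> {L+s..B}" using s by (auto simp: \<delta>_def)
    have int2: "(\<lambda>x. g x / (x-L)^2) integrable_on {L+s..L+\<delta>}"
      using integrable_on_subinterval[OF int1 sub2] by simp
    have FTCc: "((\<lambda>x. c / (x-L)^2) has_integral (c / s - c / \<delta>)) {L+s..L+\<delta>}" for c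
    proof -
      have "((\<lambda>x. c / (x-L)^2) has_integral ((\<lambda>x. - c / (x - L)) (L+\<delta>) - (\<lambda>x. - c / (x - L)) (L+s))) {L+s..L+\<delta>}"
      proof (rule fundamental_theorem_of_calculus)
        show "L + s \<le> L + \<delta>" using s by simp
        fix x assume x: "x \<in> {L+s..L+\<delta>}"
        then have "x - L \<noteq> 0" using s by auto
        then have "((\<lambda>x. - c / (x - L)) has_real_derivative c / (x-L)^2) (at x within {L+s..L+\<delta>})"
          by (auto intro!: derivative_eq_intros simp: power2_eq_square field_simps)
        then show "((\<lambda>x. - c / (x - L)) has_vector_derivative c / (x-L)^2) (at x within {L+s..L+\<delta>})"
          by (simp add: has_real_derivative_iff_has_vector_derivative)
      qed
      then show ?thesis by simp
    qed
    note FTC = FTCc[of "g L"]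
    have int3: "(\<lambda>x. g L / (x-L)^2) integrable_on {L+s..L+\<delta>}" using FTC by blast
    have FTCe: "((\<lambda>x. e / (x-L)^2) has_integral (e / s - e / \<delta>)) {L+s..L+\<delta>}"
      by (rule FTCc)
    have D: "\<bar>integral {L+s..L+\<delta>} (\<lambda>x. g x / (x-L)^2 - g L / (x-L)^2)\<bar> \<le> e / s - e / \<delta>"
    proof -
      have "norm (integral {L+s..L+\<delta>} (\<lambda>x. g x / (x-L)^2 - g L / (x-L)^2)) \<le> integral {L+s..L+\<delta>} (\<lambda>x. e / (x-L)^2)"
      proof (rule integral_norm_bound_integral)
        show "(\<lambda>x. g x / (x-L)^2 - g L / (x-L)^2) integrable_on {L+s..L+\<delta>}"
          using int2 int3 by (rule integrable_diff)
        show "(\<lambda>x. e / (x-L)^2) integrable_on {L+s..L+\<delta>}" using FTCe by blast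
        fix x assume x: "x \<in> {L+s..L+\<delta>}"
        then have xin: "x \<in> {L..B}" "dist x L < d" using s d by (auto simp: \<delta>_def dist_real_def)
        have "\<bar>g x - g L\<bar> \<le> e" using d(2)[OF xin] by (simp add: dist_real_def)
        moreover have "(x-L)^2 > 0" using x s by auto
        ultimately show "norm (g x / (x-L)^2 - g L / (x-L)^2) \<le> e / (x-L)^2"
          by (simp add: diff_divide_distrib[symmetric] abs_div divide_right_mono)
      qed
      then show ?thesis using FTCe by (simp add: integral_unique)
    qed
    have "integral {L+s..L+\<delta>} (\<lambda>x. g x / (x-L)^2 - g L / (x-L)^2)
       = integral {L+s..L+\<delta>} (\<lambda>x. g x / (x-L)^2) - (g L / s - g L / \<delta>)"
      using integral_diff[OF int2 int3] FTC by (simp add: integral_unique)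
    then have "\<bar>integral {L+s..B} (\<lambda>x. g x / (x-L)^2) - g L / s\<bar>
       = \<bar>C0 + integral {L+s..L+\<delta>} (\<lambda>x. g x / (x-L)^2 - g L / (x-L)^2) - g L / \<delta>\<bar>"
      using split by (simp add: C0_def)
    also have "\<dots> \<le> \<bar>C0\<bar> + (e / s - e/\<delta>) + \<bar>g L\<bar> / \<delta>"
      using D dp abs_divide[of "g L" \<delta>] by (smt (verit))
    also have "\<dots> \<le> e / s + (\<bar>C0\<bar> + \<bar>g L\<bar> / \<delta>)" using e dp by simp
    finally show "\<bar>integral {L+s..B} (\<lambda>x. g x / (x-L)^2) - g L / s\<bar> \<le> e / s + (\<bar>C0\<bar> + \<bar>g L\<bar> / \<delta>)" .
  qed
qed

lemma sum_split4:
  fixes F :: "nat \<Rightarrow> real"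
  assumes "2 \<le> k" "k + 1 \<le> q"
  shows "(\<Sum>j\<in>{1..q}-{k}. F j) = (\<Sum>j=1..k-2. F j) + F (k-1) + F (k+1) + (\<Sum>j=k+2..q. F j)"
proof -
  have e: "{1..q}-{k} = {1..k-2} \<union> {k-1} \<union> {k+1} \<union> {k+2..q}" using assms by auto
  show ?thesis unfolding e using assms
    apply (subst sum.union_disjoint, auto)+
    apply (subst sum.insert, auto)+
    done
qed

lemma inv_bounds:
  fixes a b p s :: real
  assumes "0 < a" "0 < p" "a \<le> p * s" "p * s \<le> b"
  shows "s > 0" "p / b \<le> 1 / s" "1 / s \<le> p / a" "p^2 / b^2 \<le> 1 / s^2" "1 / s^2 \<le> p^2 / a^2"
proof -
  show s: "s > 0" using assms by (smt (verit) zero_less_mult_iff)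
  have b: "b > 0" using assms by linarith
  show 1: "p / b \<le> 1 / s" using assms s b by (simp add: field_simps)
  show 2: "1 / s \<le> p / a" using assms s by (simp add: field_simps)
  show "p^2 / b^2 \<le> 1 / s^2" using power_mono[OF 1, of 2] assms b
    by (simp add: power_divide)
  show "1 / s^2 \<le> p^2 / a^2" using power_mono[OF 2, of 2] s
    by (simp add: power_divide)
qed
lemma ratio_lim:
  fixes h hh P :: "nat \<Rightarrow> real" and K1 :: real
  assumes o: "(\<lambda>n. h n - hh n) \<in> o[sequentially](\<lambda>n. P n^2)"
    and K1p: "K1 > 0" and hlo: "\<And>n. K1 * P n^2 \<le> hh n" and Pp: "\<And>n. P n > 0"
  shows "(\<lambda>n. h n / hh n) \<longlonglongrightarrow> 1"
proof -
  have z: "(\<lambda>n. (h n - hh n) / P n^2) \<longlonglongrightarrow> 0"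
    using o by (rule smalloD_tendsto)
  have z2: "(\<lambda>n. ((h n - hh n) / P n^2) / K1) \<longlonglongrightarrow> 0"
    using tendsto_divide[OF z tendsto_const[of K1]] K1p by simp
  have z3: "(\<lambda>n. norm (((h n - hh n) / P n^2) / K1)) \<longlonglongrightarrow> 0"
    by (rule tendsto_norm_zero[OF z2])
  have le: "norm (h n / hh n - 1) \<le> norm (((h n - hh n) / P n^2) / K1)" for n
  proof -
    have P: "P n > 0" by (rule Pp)
    have hl: "K1 * P n^2 \<le> hh n" by (rule hlo)
    have kp: "K1 * P n^2 > 0" using K1p P by simp
    have hp: "hh n > 0" using hl kp by linarith
    have "h n / hh n - 1 = (h n - hh n) / hh n" using hp by (simp add: diff_divide_distrib)
    then have "norm (h n / hh n - 1) = \<bar>h n - hh n\<bar> / hh n" using hp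
      by (simp add: abs_divide)
    also have "\<dots> \<le> \<bar>h n - hh n\<bar> / (K1 * P n^2)"
      using hl kp by (intro divide_left_mono) auto
    also have "\<dots> = norm (((h n - hh n) / P n^2) / K1)" using P K1p
      using kp by (simp only: divide_divide_eq_left mult.commute[of K1 "P n^2"] abs_divide abs_of_pos real_norm_def)
    finally show ?thesis .
  qed
  have "(\<lambda>n. h n / hh n - 1) \<longlonglongrightarrow> 0"
    using Lim_null_comparison[OF always_eventually[OF allI[OF le]] z3] .
  then show ?thesis by (rule LIM_zero_cancel)
qed
theorem mainTheorem1:
  fixes \<rho> :: "real \<Rightarrow> real" and \<alpha> \<beta> l :: real
    and p :: "nat \<Rightarrow> nat" and lam :: "nat \<Rightarrow> nat \<Rightarrow> real" and i :: "nat \<Rightarrow> nat"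
  assumes ab: "0 \<le> \<alpha>" "\<alpha> < \<beta>"
    and dens_nonneg: "\<And>x. \<rho> x \<ge> 0"
    and dens_supp: "\<And>x. x \<notin> {\<alpha>..\<beta>} \<Longrightarrow> \<rho> x = 0"
    and dens_int: "(\<rho> has_integral 1) UNIV"
    and dens_cont: "continuous_on {\<alpha>..\<beta>} \<rho>"
    and dens_bdd: "bounded (\<rho> ` {\<alpha>..\<beta>})"
    and l_in: "l \<in> {\<alpha><..<\<beta>}" and rho_pos: "\<rho> l > 0"
    and C1: "\<exists>e>0. \<rho> C1_differentiable_on ball l e"
    and p_pos: "\<And>n. p n > 0"
    and p_unbdd: "filterlim p at_top sequentially"
    and eig_pos: "\<And>n. 0 < lam n 1"
    and eig_incr: "\<And>n j. 1 \<le> j \<Longrightarrow> j < p n \<Longrightarrow> lam n j < lam n (Suc j)"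
    and i_range: "\<And>n. 2 \<le> i n \<and> i n \<le> p n - 1"
    and i_eig: "\<And>n. lam n (i n) = l"
    and gaps: "\<exists>a b. 0 < a \<and> a < b \<and>
       (\<forall>n. a \<le> real (p n) * (lam n (i n) - lam n (i n - 1)) \<and>
             real (p n) * (lam n (i n) - lam n (i n - 1)) \<le> b \<and>
             a \<le> real (p n) * (lam n (i n + 1) - lam n (i n)) \<and>
             real (p n) * (lam n (i n + 1) - lam n (i n)) \<le> b)"
    and esd_left: "(\<lambda>n. (1 / real (p n)) * (\<Sum>j = 1..i n - 2. flam l (lam n j))
        - integral {\<alpha>..l - (lam n (i n) - lam n (i n - 1))} (\<lambda>x. flam l x * \<rho> x))
        \<in> o[sequentially](\<lambda>n. real (p n))"
    and esd_right: "(\<lambda>n. (1 / real (p n)) * (\<Sum>j = i n + 2..p n. flam l (lam n j))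
        - integral {l + (lam n (i n + 1) - lam n (i n))..\<beta>} (\<lambda>x. flam l x * \<rho> x))
        \<in> o[sequentially](\<lambda>n. real (p n))"
  defines "h \<equiv> \<lambda>n. \<Sum>j \<in> {1..p n} - {i n}.
              lam n (i n) * lam n j / (lam n (i n) - lam n j)^2"
    and "hhat \<equiv> \<lambda>n. l^2 * (1 / (lam n (i n) - lam n (i n - 1))^2
              + 1 / (lam n (i n + 1) - lam n (i n))^2
              + real (p n) * \<rho> l * (1 / (lam n (i n) - lam n (i n - 1))
                                     + 1 / (lam n (i n + 1) - lam n (i n))))"
  shows "(\<lambda>n. h n - hhat n) \<in> o[sequentially](\<lambda>n. real (p n)^2)
       \<and> hhat \<in> \<Theta>[sequentially](\<lambda>n. real (p n)^2)
       \<and> (\<lambda>n. h n / hhat n) \<longlonglongrightarrow> 1"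
proof -
  obtain a b where ab0: "0 < a" "a < b" and gp: "\<And>n. a \<le> real (p n) * (lam n (i n) - lam n (i n - 1)) \<and>
             real (p n) * (lam n (i n) - lam n (i n - 1)) \<le> b \<and>
             a \<le> real (p n) * (lam n (i n + 1) - lam n (i n)) \<and>
             real (p n) * (lam n (i n + 1) - lam n (i n)) \<le> b"
    using gaps by blast
  define sm where "sm = (\<lambda>n. lam n (i n) - lam n (i n - 1))"
  define sp where "sp = (\<lambda>n. lam n (i n + 1) - lam n (i n))"
  have pp: "real (p n) > 0" for n using p_pos[of n] by simp
  have bm: "sm n > 0" "real (p n) / b \<le> 1 / sm n" "1 / sm n \<le> real (p n) / a"
     "real (p n)^2 / b^2 \<le> 1 / (sm n)^2" "1 / (sm n)^2 \<le> real (p n)^2 / a^2" for n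
    using inv_bounds[OF ab0(1) pp[of n], where s="sm n" and b=b] gp[of n] by (auto simp: sm_def)
  have bp: "sp n > 0" "real (p n) / b \<le> 1 / sp n" "1 / sp n \<le> real (p n) / a"
     "real (p n)^2 / b^2 \<le> 1 / (sp n)^2" "1 / (sp n)^2 \<le> real (p n)^2 / a^2" for n
    using inv_bounds[OF ab0(1) pp[of n], where s="sp n" and b=b] gp[of n] by (auto simp: sp_def)
  have smb: "sm n \<le> b / real (p n)" for n using gp[of n] pp[of n] by (simp add: sm_def field_simps)
  have spb: "sp n \<le> b / real (p n)" for n using gp[of n] pp[of n] by (simp add: sp_def field_simps)
  have lpos: "l > 0" using l_in ab by auto
  have rl: "real (p n) \<ge> 0" for n by simp
  define g where "g = (\<lambda>x. l * x * \<rho> x)"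
  have gc: "continuous_on {\<alpha>..\<beta>} g" unfolding g_def by (intro continuous_intros dens_cont)
  have gL: "g l = l^2 * \<rho> l" by (simp add: g_def power2_eq_square)
  have fl1: "(\<lambda>x. flam l x * \<rho> x) = (\<lambda>x. g x / (l - x)^2)"
    by (auto simp: flam_def g_def)
  have fl2: "(\<lambda>x. flam l x * \<rho> x) = (\<lambda>x. g x / (x - l)^2)"
    by (auto simp: flam_def g_def power2_commute)
  define FL where "FL = (\<lambda>n. integral {\<alpha>..l - sm n} (\<lambda>x. g x / (l - x)^2))"
  define FR where "FR = (\<lambda>n. integral {l + sp n..\<beta>} (\<lambda>x. g x / (x - l)^2))"
  define SL where "SL = (\<lambda>n. \<Sum>j = 1..i n - 2. flam l (lam n j))"
  define SR where "SR = (\<lambda>n. \<Sum>j = i n + 2..p n. flam l (lam n j))"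
  define EL where "EL = (\<lambda>n. (1 / real (p n)) * SL n - FL n)"
  define ER where "ER = (\<lambda>n. (1 / real (p n)) * SR n - FR n)"
  have ELo: "EL \<in> o[sequentially](\<lambda>n. real (p n))"
    using esd_left unfolding EL_def SL_def FL_def sm_def fl1 i_eig .
  have ERo: "ER \<in> o[sequentially](\<lambda>n. real (p n))"
    using esd_right unfolding ER_def SR_def FR_def sp_def fl2 i_eig .
  have hdec: "h n - hhat n = real (p n) * EL n + real (p n) * ER n
      + real (p n) * (FL n - g l / sm n) + real (p n) * (FR n - g l / sp n) - l / sm n + l / sp n" for n
  proof -
    have ir: "2 \<le> i n" "i n + 1 \<le> p n" using i_range[of n] p_pos[of n] by auto
    have lm: "lam n (i n - 1) = l - sm n" using i_eig[of n] by (simp add: sm_def)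
    have lp: "lam n (i n + 1) = l + sp n" using i_eig[of n] by (simp add: sp_def)
    have "h n = SL n + flam l (l - sm n) + flam l (l + sp n) + SR n"
      unfolding h_def SL_def SR_def i_eig
      by (subst sum_split4[OF ir]) (simp add: flam_def lm[symmetric] lp[symmetric])
    also have "\<dots> = SL n + (l^2 / (sm n)^2 - l / sm n) + (l^2 / (sp n)^2 + l / sp n) + SR n"
      using bm(1)[of n] bp(1)[of n] by (simp add: flam_def field_simps power2_eq_square)
    finally have hn: "h n = \<dots>" .
    have hh: "hhat n = l^2 / (sm n)^2 + l^2 / (sp n)^2 + real (p n) * (g l / sm n) + real (p n) * (g l / sp n)"
      unfolding hhat_def gL sm_def sp_def by (simp add: algebra_simps)
    show ?thesis unfolding hn hh EL_def ER_def using pp[of n] by (simp add: field_simps)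
  qed
  have preal: "filterlim (\<lambda>n. real (p n)) at_top sequentially"
    by (rule filterlim_compose[OF filterlim_real_sequentially p_unbdd])
  have pge: "eventually (\<lambda>n. K \<le> real (p n)) sequentially" for K
    using preal by (simp add: filterlim_at_top)
  have gcl: "continuous_on {\<alpha>..l} g" using l_in by (intro continuous_on_subset[OF gc]) auto
  have gcr: "continuous_on {l..\<beta>} g" using l_in by (intro continuous_on_subset[OF gc]) auto
  have al: "\<alpha> < l" "l < \<beta>" using l_in by auto
  have part1: "(\<lambda>n. h n - hhat n) \<in> o[sequentially](\<lambda>n. real (p n)^2)"
  proof (rule landau_o.smallI)
    fix c :: real assume c: "c > 0"
    have e: "a * c / 12 > 0" using c ab0 by simp
    obtain d1 C1 where d1: "d1 > 0" and C1: "\<And>s. 0 < s \<Longrightarrow> s < d1 \<Longrightarrow>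
       \<bar>integral {\<alpha>..l-s} (\<lambda>x. g x / (l-x)^2) - g l / s\<bar> \<le> a * c / 12 / s + C1"
      using left_int[OF al(1) gcl e] by blast
    obtain d2 C2 where d2: "d2 > 0" and C2: "\<And>s. 0 < s \<Longrightarrow> s < d2 \<Longrightarrow>
       \<bar>integral {l+s..\<beta>} (\<lambda>x. g x / (x-l)^2) - g l / s\<bar> \<le> a * c / 12 / s + C2"
      using right_int[OF al(2) gcr e] by blast
    have c6: "c / 6 > 0" using c by simp
    have ev1: "eventually (\<lambda>n. norm (EL n) \<le> c / 6 * norm (real (p n))) sequentially"
      using landau_o.smallD[OF ELo c6] .
    have ev2: "eventually (\<lambda>n. norm (ER n) \<le> c / 6 * norm (real (p n))) sequentially"
      using landau_o.smallD[OF ERo c6] .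
    have ev3: "eventually (\<lambda>n. max (b / d1 + 1) (b / d2 + 1) \<le> real (p n)
        \<and> 12 * \<bar>C1\<bar> / c \<le> real (p n) \<and> 12 * \<bar>C2\<bar> / c \<le> real (p n)
        \<and> 6 * l / (a * c) \<le> real (p n)) sequentially"
      by (intro eventually_conj pge)
    show "eventually (\<lambda>n. norm (h n - hhat n) \<le> c * norm (real (p n)^2)) sequentially"
      using ev1 ev2 ev3
    proof eventually_elim
      case (elim n)
      define P where "P = real (p n)"
      have P: "P > 0" using pp[of n] by (simp add: P_def)
      have E1: "P * \<bar>EL n\<bar> \<le> c / 6 * P^2"
        using mult_left_mono[of "\<bar>EL n\<bar>" "c / 6 * P" P] elim(1) P
        by (simp add: P_def power2_eq_square)
      have E2: "P * \<bar>ER n\<bar> \<le> c / 6 * P^2"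
        using mult_left_mono[of "\<bar>ER n\<bar>" "c / 6 * P" P] elim(2) P
        by (simp add: P_def power2_eq_square)
      have smd: "sm n < d1"
      proof -
        have "b / d1 < P" using elim(3) by (simp add: P_def)
        then have bd: "b < P * d1" using d1 by (simp add: field_simps)
        have s1: "sm n \<le> b / P" using smb[of n] by (simp add: P_def)
        have s2: "sm n * P \<le> b" using s1 P by (simp add: pos_le_divide_eq)
        have "sm n * P < d1 * P" using s2 bd by (simp add: mult.commute)
        then show ?thesis using P by (simp add: mult_less_cancel_right)
      qed
      have spd: "sp n < d2"
      proof -
        have "b / d2 < P" using elim(3) by (simp add: P_def)
        then have bd: "b < P * d2" using d2 by (simp add: field_simps)
        have s1: "sp n \<le> b / P" using spb[of n] by (simp add: P_def)
        have s2: "sp n * P \<le> b" using s1 P by (simp add: pos_le_divide_eq)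
        have "sp n * P < d2 * P" using s2 bd by (simp add: mult.commute)
        then show ?thesis using P by (simp add: mult_less_cancel_right)
      qed
      have E3a: "\<bar>FL n - g l / sm n\<bar> \<le> a * c / 12 / sm n + C1"
        using C1[OF bm(1)[of n] smd] by (simp add: FL_def)
      have E4a: "\<bar>FR n - g l / sp n\<bar> \<le> a * c / 12 / sp n + C2"
        using C2[OF bp(1)[of n] spd] by (simp add: FR_def)
      have q1: "a * c / 12 / sm n \<le> c / 12 * P"
        using mult_left_mono[OF bm(3)[of n], of "a * c / 12"] ab0 c by (simp add: P_def field_simps)
      have q2: "a * c / 12 / sp n \<le> c / 12 * P"
        using mult_left_mono[OF bp(3)[of n], of "a * c / 12"] ab0 c by (simp add: P_def field_simps)
      have r1: "\<bar>C1\<bar> \<le> c / 12 * P" using elim(3) c by (simp add: P_def field_simps)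
      have r2: "\<bar>C2\<bar> \<le> c / 12 * P" using elim(3) c by (simp add: P_def field_simps)
      have E3b: "\<bar>FL n - g l / sm n\<bar> \<le> c / 6 * P" using E3a q1 r1 by linarith
      have E3: "P * \<bar>FL n - g l / sm n\<bar> \<le> c / 6 * P^2"
        using mult_left_mono[OF E3b, of P] P by (simp add: power2_eq_square)
      have E4b: "\<bar>FR n - g l / sp n\<bar> \<le> c / 6 * P" using E4a q2 r2 by linarith
      have E4: "P * \<bar>FR n - g l / sp n\<bar> \<le> c / 6 * P^2"
        using mult_left_mono[OF E4b, of P] P by (simp add: power2_eq_square)
      have lq: "l \<le> c / 6 * P * a" using elim(3) ab0 c by (simp add: P_def field_simps mult_ac)
      have lq2: "l * (P / a) \<le> c / 6 * P^2"
      proof -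
        have la: "l / a \<le> c / 6 * P" using lq ab0 by (simp add: pos_divide_le_eq)
        have "(l / a) * P \<le> (c / 6 * P) * P" using mult_right_mono[OF la, of P] P by simp
        then show ?thesis by (simp add: power2_eq_square)
      qed
      have "l / sm n \<le> l * (P / a)"
        using mult_left_mono[OF bm(3)[of n], of l] lpos by (simp add: P_def)
      then have E5: "l / sm n \<le> c / 6 * P^2" using lq2 by linarith
      have "l / sp n \<le> l * (P / a)"
        using mult_left_mono[OF bp(3)[of n], of l] lpos by (simp add: P_def)
      then have E6: "l / sp n \<le> c / 6 * P^2" using lq2 by linarith
      have am: "\<bar>P * X\<bar> = P * \<bar>X\<bar>" for X using P by (simp add: abs_mult)
      have E5': "l / sm n \<ge> 0" "l / sp n \<ge> 0" using lpos bm(1)[of n] bp(1)[of n] by auto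
      have "\<bar>h n - hhat n\<bar> \<le> P * \<bar>EL n\<bar> + P * \<bar>ER n\<bar> + P * \<bar>FL n - g l / sm n\<bar>
          + P * \<bar>FR n - g l / sp n\<bar> + l / sm n + l / sp n"
        unfolding hdec P_def[symmetric]
        using P E5' am[of "EL n"] am[of "ER n"] am[of "FL n - g l / sm n"] am[of "FR n - g l / sp n"]
        by (smt (verit))
      also have "\<dots> \<le> c * P^2" using E1 E2 E3 E4 E5 E6 by linarith
      finally show ?case by (simp add: P_def)
    qed
  qed
  have hform: "hhat n = l^2 * (1 / (sm n)^2 + 1 / (sp n)^2 + real (p n) * \<rho> l * (1 / sm n + 1 / sp n))" for n
    unfolding hhat_def sm_def sp_def by simp
  define K1 where "K1 = 2 * l^2 / b^2"
  define K2 where "K2 = l^2 * (2 / a^2 + 2 * \<rho> l / a)"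
  have K1p: "K1 > 0" using lpos ab0 by (simp add: K1_def)
  have K2p: "K2 > 0" unfolding K2_def using lpos ab0 rho_pos by (intro mult_pos_pos add_pos_pos divide_pos_pos) auto
  have hlo: "K1 * real (p n)^2 \<le> hhat n" for n
  proof -
    define P where "P = real (p n)"
    have P: "P > 0" using pp[of n] by (simp add: P_def)
    have t: "P * \<rho> l * (1 / sm n + 1 / sp n) \<ge> 0" using P rho_pos bm(1)[of n] bp(1)[of n] by simp
    have "2 * P^2 / b^2 \<le> 1 / (sm n)^2 + 1 / (sp n)^2 + P * \<rho> l * (1 / sm n + 1 / sp n)"
      using bm(4)[of n] bp(4)[of n] t unfolding P_def[symmetric] by linarith
    from mult_left_mono[OF this, of "l^2"] have "l^2 * (2 * P^2 / b^2) \<le> hhat n"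
      unfolding hform P_def by simp
    then show ?thesis by (simp add: K1_def P_def mult_ac)
  qed
  have hhi: "hhat n \<le> K2 * real (p n)^2" for n
  proof -
    define P where "P = real (p n)"
    have P: "P > 0" using pp[of n] by (simp add: P_def)
    have uv: "1 / sm n + 1 / sp n \<le> 2 * P / a" using bm(3)[of n] bp(3)[of n] unfolding P_def[symmetric] by simp
    have t: "P * \<rho> l * (1 / sm n + 1 / sp n) \<le> P * \<rho> l * (2 * P / a)"
      using mult_left_mono[OF uv, of "P * \<rho> l"] P rho_pos by simp
    have "1 / (sm n)^2 + 1 / (sp n)^2 + P * \<rho> l * (1 / sm n + 1 / sp n) \<le> 2 * P^2 / a^2 + P * \<rho> l * (2 * P / a)"
      using bm(5)[of n] bp(5)[of n] t unfolding P_def[symmetric] by linarith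
    from mult_left_mono[OF this, of "l^2"] have "hhat n \<le> l^2 * (2 * P^2 / a^2 + P * \<rho> l * (2 * P / a))"
      unfolding hform P_def by simp
    also have "\<dots> = K2 * P^2" by (simp add: K2_def power2_eq_square field_simps)
    finally show ?thesis by (simp add: P_def)
  qed
  have part2: "hhat \<in> \<Theta>[sequentially](\<lambda>n. real (p n)^2)"
  proof (rule bigthetaI'[OF K1p K2p])
    show "eventually (\<lambda>n. K1 * norm (real (p n)^2) \<le> norm (hhat n) \<and> norm (hhat n) \<le> K2 * norm (real (p n)^2)) sequentially"
    proof (rule always_eventually, intro allI)
      fix n
      have "0 \<le> K1 * real (p n)^2" using K1p by simp
      then show "K1 * norm (real (p n)^2) \<le> norm (hhat n) \<and> norm (hhat n) \<le> K2 * norm (real (p n)^2)"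
        using hlo[of n] hhi[of n] by simp
    qed
  qed
  have part3: "(\<lambda>n. h n / hhat n) \<longlonglongrightarrow> 1"
    by (rule ratio_lim[OF part1 K1p hlo pp])
  show ?thesis using part1 part2 part3 by blast
qed

end
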